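(* Let $N$ be a phylogenetic network on $X\subseteq[n]$ and let $i,j\in[n]$, $i\neq j$. Then $(i,j)$ is a reticulated-cherry of $N$ if and only if $(i,j)$ is a reticulated-cherry of the multiset $\boldsymbol\mu(N)$.
   Context: A (binary) phylogenetic network on a finite set $X\subseteq[n]=\{1,\dots,n\}$ is a directed acyclic graph $N=(V,A)$ without parallel arcs in which every node is exactly one of: the root (indegree 0, outdegree 1; there is exactly one), a leaf (indegree 1, outdegree 0), a tree node (indegree 1, outdegree 2), or a reticulation (indegree 2, outdegree 1); the leaves are identified with the elements of $X$. $V_T(N)$ denotes the set of leaves and tree nodes, $V_H(N)$ the set of reticulations. Paths are directed and trivial paths of length 0 are allowed; $m(u,v)$ denotes the number of directed paths from $u$ to $v$. Extended $\mu$-vectors: for $u\in V$ and $i\in[n]$, $\mu_i(u)=m(u,i)$ (which is $0$ if $i\notin X$), and $\mu_0(u)=\sum_{h\in V_H(N)} m(u,h)$; $\mu(u)=(\mu_0(u),\dots,\mu_n(u))$. The (extended) $\mu$-representation $\boldsymbol\mu(N)$ is the multiset $\{\mu(u)\mid u\in V_T(N)\}$, each vector counted with the number of nodes of $V_T(N)$ having it. For $S\subseteq\{0,\dots,n\}$, $\delta_S$ is the 0/1 indicator vector of $S$ indexed by $0,\dots,n$, and $\delta_{j_1,\dots,j_k}=\delta_{\{j_1,\dots,j_k\}}$. In a network, for distinct leaves $i,j$ with parents $p_i,p_j$, $(i,j)$ is a reticulated-cherry of $N$ if $p_i$ is a reticulation, $p_j$ is a tree node, and $p_j$ is a parent of $p_i$.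 For a finite multiset $\boldsymbol\mu$ of vectors of nonnegative integers indexed by $0,\dots,n$ and distinct $i,j\in[n]$, $(i,j)$ is a reticulated-cherry of $\boldsymbol\mu$ if $\delta_{0,i,j}$ belongs to $\boldsymbol\mu$ with multiplicity exactly $1$, and every element $\mu=(\mu_0,\dots,\mu_n)$ of $\boldsymbol\mu$ other than $\delta_i$ and $\delta_j$ satisfies $\mu_0\ge\mu_i\ge\mu_j$. *)

theory Defs
  imports Main "HOL-Library.Multiset"
begin

text \<open>A network is given by a vertex set V, an arc set A (a set, so no parallel
arcs), a leaf set X \<subseteq> [n] and an injective labelling lf mapping each label
i \<in> X to the leaf vertex identified with i.\<close>

definition indeg :: "('v \<times> 'v) set \<Rightarrow> 'v \<Rightarrow> nat" where
  "indeg A v = card {u. (u, v) \<in> A}"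

definition outdeg :: "('v \<times> 'v) set \<Rightarrow> 'v \<Rightarrow> nat" where
  "outdeg A v = card {w. (v, w) \<in> A}"

definition is_root :: "('v \<times> 'v) set \<Rightarrow> 'v \<Rightarrow> bool" where
  "is_root A v \<longleftrightarrow> indeg A v = 0 \<and> outdeg A v = 1"

definition is_leaf :: "('v \<times> 'v) set \<Rightarrow> 'v \<Rightarrow> bool" where
  "is_leaf A v \<longleftrightarrow> indeg A v = 1 \<and> outdeg A v = 0"

definition is_tree_node :: "('v \<times> 'v) set \<Rightarrow> 'v \<Rightarrow> bool" where
  "is_tree_node A v \<longleftrightarrow> indeg A v = 1 \<and> outdeg A v = 2"

definition is_ret :: "('v \<times> 'v) set \<Rightarrow> 'v \<Rightarrow> bool" where
  "is_ret A v \<longleftrightarrow> indeg A v = 2 \<and> outdeg A v = 1"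

definition phylo_network ::
  "nat \<Rightarrow> 'v set \<Rightarrow> ('v \<times> 'v) set \<Rightarrow> nat set \<Rightarrow> (nat \<Rightarrow> 'v) \<Rightarrow> bool" where
  "phylo_network n V A X lf \<longleftrightarrow>
     finite V \<and> A \<subseteq> V \<times> V \<and> acyclic A \<and> X \<subseteq> {1..n} \<and>
     (\<forall>v\<in>V. is_root A v \<or> is_leaf A v \<or> is_tree_node A v \<or> is_ret A v) \<and>
     (\<exists>!r. r \<in> V \<and> is_root A r) \<and>
     inj_on lf X \<and> lf ` X = {v \<in> V. is_leaf A v}"

text \<open>Directed paths as nonempty vertex lists (trivial paths allowed);
  m(u,v) is the number of directed paths from u to v.\<close>

definition npaths :: "('v \<times> 'v) set \<Rightarrow> 'v \<Rightarrow> 'v \<Rightarrow> nat" where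
  "npaths A u v = card {p. p \<noteq> [] \<and> hd p = u \<and> last p = v \<and>
                          successively (\<lambda>x y. (x, y) \<in> A) p}"

definition VT :: "'v set \<Rightarrow> ('v \<times> 'v) set \<Rightarrow> 'v set" where
  "VT V A = {v \<in> V. is_leaf A v \<or> is_tree_node A v}"

definition VH :: "'v set \<Rightarrow> ('v \<times> 'v) set \<Rightarrow> 'v set" where
  "VH V A = {v \<in> V. is_ret A v}"

text \<open>Vectors indexed by 0..n are represented as functions nat \<Rightarrow> nat which vanish
  beyond n.\<close>

definition mu_vec ::
  "nat \<Rightarrow> 'v set \<Rightarrow> ('v \<times> 'v) set \<Rightarrow> nat set \<Rightarrow> (nat \<Rightarrow> 'v) \<Rightarrow> 'v \<Rightarrow> (nat \<Rightarrow> nat)" where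
  "mu_vec n V A X lf u = (\<lambda>k.
     if k = 0 then (\<Sum>h\<in>VH V A. npaths A u h)
     else if k \<le> n \<and> k \<in> X then npaths A u (lf k)
     else 0)"

definition mu_rep ::
  "nat \<Rightarrow> 'v set \<Rightarrow> ('v \<times> 'v) set \<Rightarrow> nat set \<Rightarrow> (nat \<Rightarrow> 'v) \<Rightarrow> (nat \<Rightarrow> nat) multiset" where
  "mu_rep n V A X lf = image_mset (mu_vec n V A X lf) (mset_set (VT V A))"

definition delta :: "nat \<Rightarrow> nat set \<Rightarrow> (nat \<Rightarrow> nat)" where
  "delta n S = (\<lambda>k. if k \<le> n \<and> k \<in> S then 1 else 0)"

definition ret_cherry_net ::
  "'v set \<Rightarrow> ('v \<times> 'v) set \<Rightarrow> nat set \<Rightarrow> (nat \<Rightarrow> 'v) \<Rightarrow> nat \<Rightarrow> nat \<Rightarrow> bool" where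
  "ret_cherry_net V A X lf i j \<longleftrightarrow>
     i \<in> X \<and> j \<in> X \<and> i \<noteq> j \<and>
     (\<exists>pi pj. (pi, lf i) \<in> A \<and> (pj, lf j) \<in> A \<and>
        is_ret A pi \<and> is_tree_node A pj \<and> (pj, pi) \<in> A)"

definition ret_cherry_mset :: "nat \<Rightarrow> (nat \<Rightarrow> nat) multiset \<Rightarrow> nat \<Rightarrow> nat \<Rightarrow> bool" where
  "ret_cherry_mset n M i j \<longleftrightarrow>
     count M (delta n {0, i, j}) = 1 \<and>
     (\<forall>m \<in># M. m \<noteq> delta n {i} \<and> m \<noteq> delta n {j} \<longrightarrow> m i \<le> m 0 \<and> m j \<le> m i)"

end

theory Submission imports Defs begin

definition paths :: "('v \<times> 'v) set \<Rightarrow> 'v \<Rightarrow> 'v \<Rightarrow> 'v list set" where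
  "paths R u v = {p. p \<noteq> [] \<and> hd p = u \<and> last p = v \<and> successively (\<lambda>x y. (x, y) \<in> R) p}"

lemma fin_succ: "finite R \<Longrightarrow> finite {c. (u,c)\<in>R}"
proof -
  assume "finite R"
  hence "finite (snd ` R)" by simp
  moreover have "{c. (u,c)\<in>R} \<subseteq> snd ` R" by (auto intro: rev_image_eqI)
  ultimately show ?thesis by (rule rev_finite_subset)
qed

lemma fin_pred: "finite R \<Longrightarrow> finite {c. (c,u)\<in>R}"
proof -
  assume "finite R"
  hence "finite (fst ` R)" by simp
  moreover have "{c. (c,u)\<in>R} \<subseteq> fst ` R" by (auto intro: rev_image_eqI)
  ultimately show ?thesis by (rule rev_finite_subset)
qed

lemma npaths_paths: "npaths R u v = card (paths R u v)"
  unfolding npaths_def paths_def ..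

lemma paths_rec: "paths R u v = (if u = v then {[u]} else {}) \<union> (\<Union>c\<in>{c. (u,c)\<in>R}. (Cons u) ` paths R c v)"
proof (rule set_eqI)
  fix p
  show "p \<in> paths R u v \<longleftrightarrow> p \<in> (if u = v then {[u]} else {}) \<union> (\<Union>c\<in>{c. (u,c)\<in>R}. (Cons u) ` paths R c v)"
  proof
    assume "p \<in> paths R u v"
    then obtain q where p: "p = u # q" and l: "last p = v" and s: "successively (\<lambda>x y. (x, y) \<in> R) p"
      unfolding paths_def by (cases p) auto
    show "p \<in> (if u = v then {[u]} else {}) \<union> (\<Union>c\<in>{c. (u,c)\<in>R}. (Cons u) ` paths R c v)"
    proof (cases q)
      case Nil thus ?thesis using p l by auto
    next
      case (Cons c r)
      have "(u,c) \<in> R" "q \<in> paths R c v" using s l p Cons unfolding paths_def by auto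
      thus ?thesis using p by auto
    qed
  next
    assume "p \<in> (if u = v then {[u]} else {}) \<union> (\<Union>c\<in>{c. (u,c)\<in>R}. (Cons u) ` paths R c v)"
    thus "p \<in> paths R u v" unfolding paths_def
      by (auto split: if_splits simp: successively_Cons)
  qed
qed

lemma paths_finite:
  assumes "finite R" "acyclic R"
  shows "finite (paths R u v)"
proof -
  have wfR: "wf (R\<inverse>)" by (rule finite_acyclic_wf_converse[OF assms])
  show ?thesis
  proof (induction u rule: wf_induct_rule[OF wfR])
    case (1 u)
    have fc: "finite {c. (u,c)\<in>R}"
      by (rule fin_succ[OF assms(1)])
    have "finite ((if u = v then {[u]} else {}) \<union> (\<Union>c\<in>{c. (u,c)\<in>R}. (Cons u) ` paths R c v))"
      using 1 fc by simp
    thus ?case by (subst paths_rec)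
  qed
qed

lemma paths_reach: "p \<in> paths R c v \<Longrightarrow> (c, v) \<in> R\<^sup>*"
proof (induction p arbitrary: c)
  case Nil thus ?case by (simp add: paths_def)
next
  case (Cons a q)
  show ?case
  proof (cases q)
    case Nil thus ?thesis using Cons.prems by (auto simp: paths_def)
  next
    case (Cons b r)
    have "q \<in> paths R b v" "(c,b) \<in> R" using Cons.prems \<open>q = b # r\<close> by (auto simp: paths_def)
    thus ?thesis using Cons.IH by (meson converse_rtrancl_into_rtrancl)
  qed
qed

lemma npaths_rec:
  assumes "finite R" "acyclic R"
  shows "npaths R u v = (if u = v then 1 else 0) + (\<Sum>c\<in>{c. (u,c)\<in>R}. npaths R c v)"
proof -
  have fc: "finite {c. (u,c)\<in>R}"
    by (rule fin_succ[OF assms(1)])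
  have fin: "\<And>c. finite (paths R c v)" by (rule paths_finite[OF assms])
  have "card (\<Union>c\<in>{c. (u,c)\<in>R}. (Cons u) ` paths R c v) = (\<Sum>c\<in>{c. (u,c)\<in>R}. card ((Cons u) ` paths R c v))"
    by (rule card_UN_disjoint) (use fc fin in \<open>auto simp: paths_def\<close>)
  also have "\<dots> = (\<Sum>c\<in>{c. (u,c)\<in>R}. npaths R c v)"
    by (rule sum.cong) (auto simp: npaths_paths card_image)
  finally have eq: "card (\<Union>c\<in>{c. (u,c)\<in>R}. (Cons u) ` paths R c v) = (\<Sum>c\<in>{c. (u,c)\<in>R}. npaths R c v)" .
  have "npaths R u v = card ((if u = v then {[u]} else {}) \<union> (\<Union>c\<in>{c. (u,c)\<in>R}. (Cons u) ` paths R c v))"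
    by (subst paths_rec[symmetric]) (simp add: npaths_paths)
  also have "\<dots> = card (if u = v then {[u]} else {}) + card (\<Union>c\<in>{c. (u,c)\<in>R}. (Cons u) ` paths R c v)"
    by (rule card_Un_disjoint) (use fc fin in \<open>auto simp: paths_def\<close>)
  finally show ?thesis using eq by simp
qed

lemma npaths_pos:
  assumes "finite R" "acyclic R" "(u,v) \<in> R\<^sup>*"
  shows "npaths R u v > 0"
  using assms(3)
proof (induction rule: converse_rtrancl_induct)
  case base thus ?case by (subst npaths_rec[OF assms(1,2)]) simp
next
  case (step y z)
  have fc: "finite {c. (y,c)\<in>R}"
    by (rule fin_succ[OF assms(1)])
  have "npaths R z v \<le> (\<Sum>c\<in>{c. (y,c)\<in>R}. npaths R c v)"
    by (rule member_le_sum) (use step fc in auto)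
  thus ?case using step by (subst npaths_rec[OF assms(1,2)]) simp
qed

lemma npaths_pos_reach:
  assumes "npaths R u v > 0" shows "(u,v) \<in> R\<^sup>*"
proof -
  have "paths R u v \<noteq> {}" using assms by (auto simp: npaths_paths)
  thus ?thesis using paths_reach[of _ R u v] by blast
qed

lemma npaths_rev: "npaths R u v = npaths (R\<inverse>) v u"
proof -
  have "paths R u v = rev ` paths (R\<inverse>) v u"
  proof (rule set_eqI)
    fix p show "p \<in> paths R u v \<longleftrightarrow> p \<in> rev ` paths (R\<inverse>) v u"
      unfolding paths_def
      by (rule iffI, rule image_eqI[of _ _ "rev p"]) (auto simp: hd_rev last_rev)
  qed
  thus ?thesis by (simp add: npaths_paths card_image)
qed

lemma npaths_rec_par:
  assumes "finite R" "acyclic R" "u \<noteq> v"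
  shows "npaths R u v = (\<Sum>p\<in>{p. (p,v)\<in>R}. npaths R u p)"
proof -
  have "npaths R u v = npaths (R\<inverse>) v u" by (rule npaths_rev)
  also have "\<dots> = (\<Sum>c\<in>{c. (v,c)\<in>R\<inverse>}. npaths (R\<inverse>) c u)"
    using npaths_rec[of "R\<inverse>" v u] assms by simp
  also have "\<dots> = (\<Sum>p\<in>{p. (p,v)\<in>R}. npaths R u p)"
    by (simp add: npaths_rev[of R])
  finally show ?thesis .
qed


locale net =
  fixes n :: nat and V :: "'v set" and A :: "('v \<times> 'v) set" and X :: "nat set" and lf :: "nat \<Rightarrow> 'v"
  assumes net: "phylo_network n V A X lf"
begin

abbreviation "mu \<equiv> mu_vec n V A X lf"

lemma finV: "finite V" and AV: "A \<subseteq> V \<times> V" and acyc: "acyclic A" and XS: "X \<subseteq> {1..n}"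
  and cls: "\<And>v. v \<in> V \<Longrightarrow> is_root A v \<or> is_leaf A v \<or> is_tree_node A v \<or> is_ret A v"
  and root1: "\<exists>!r. r \<in> V \<and> is_root A r"
  and injlf: "inj_on lf X" and lfX: "lf ` X = {v \<in> V. is_leaf A v}"
  using net unfolding phylo_network_def by auto

lemma finA: "finite A" using finite_subset[OF AV] finV by blast

lemma fin_ch: "finite {c. (u,c) \<in> A}"
  by (rule fin_succ[OF finA])
lemma fin_par: "finite {c. (c,u) \<in> A}"
  by (rule fin_pred[OF finA])

lemma inV1: "(u,v) \<in> A \<Longrightarrow> u \<in> V" and inV2: "(u,v) \<in> A \<Longrightarrow> v \<in> V" using AV by auto

lemma finVH: "finite (VH V A)" using finV unfolding VH_def by auto
lemma finVT: "finite (VT V A)" using finV unfolding VT_def by auto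

lemma leaf_ch: "is_leaf A v \<Longrightarrow> {c. (v,c) \<in> A} = {}"
  using fin_ch[of v] unfolding is_leaf_def outdeg_def by auto
lemma root_ch: "is_root A v \<Longrightarrow> \<exists>c. {c. (v,c) \<in> A} = {c}"
  unfolding is_root_def outdeg_def by (simp add: card_1_singleton_iff)
lemma ret_ch: "is_ret A v \<Longrightarrow> \<exists>c. {c. (v,c) \<in> A} = {c}"
  unfolding is_ret_def outdeg_def by (simp add: card_1_singleton_iff)
lemma tree_ch: "is_tree_node A v \<Longrightarrow> \<exists>c1 c2. {c. (v,c) \<in> A} = {c1,c2} \<and> c1 \<noteq> c2"
  unfolding is_tree_node_def outdeg_def by (simp add: card_2_iff)
lemma leaf_par: "is_leaf A v \<Longrightarrow> \<exists>p. {c. (c,v) \<in> A} = {p}"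
  unfolding is_leaf_def indeg_def by (simp add: card_1_singleton_iff)
lemma tree_par: "is_tree_node A v \<Longrightarrow> \<exists>p. {c. (c,v) \<in> A} = {p}"
  unfolding is_tree_node_def indeg_def by (simp add: card_1_singleton_iff)
lemma ret_par: "is_ret A v \<Longrightarrow> \<exists>c1 c2. {c. (c,v) \<in> A} = {c1,c2} \<and> c1 \<noteq> c2"
  unfolding is_ret_def indeg_def by (simp add: card_2_iff)
lemma root_par: "is_root A v \<Longrightarrow> {c. (c,v) \<in> A} = {}"
  using fin_par[of v] unfolding is_root_def indeg_def by auto

lemma excl:
  "\<not> (is_leaf A v \<and> is_tree_node A v)" "\<not> (is_leaf A v \<and> is_ret A v)" "\<not> (is_leaf A v \<and> is_root A v)"
  "\<not> (is_tree_node A v \<and> is_ret A v)" "\<not> (is_tree_node A v \<and> is_root A v)" "\<not> (is_ret A v \<and> is_root A v)"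
  unfolding is_leaf_def is_tree_node_def is_ret_def is_root_def by auto

lemma lf_in: "k \<in> X \<Longrightarrow> lf k \<in> V \<and> is_leaf A (lf k)" using lfX by auto
lemma leaf_lf: "v \<in> V \<Longrightarrow> is_leaf A v \<Longrightarrow> \<exists>k\<in>X. v = lf k" using lfX by auto
lemma X0: "k \<in> X \<Longrightarrow> k \<noteq> 0 \<and> k \<le> n" using XS by auto

lemma mu0: "mu u 0 = (\<Sum>g\<in>VH V A. npaths A u g)" by (simp add: mu_vec_def)
lemma muX: "k \<in> X \<Longrightarrow> mu u k = npaths A u (lf k)" using X0[of k] by (simp add: mu_vec_def)
lemma muO: "k \<noteq> 0 \<Longrightarrow> k \<notin> X \<Longrightarrow> mu u k = 0" by (simp add: mu_vec_def)

lemma nrec: "npaths A u v = (if u = v then 1 else 0) + (\<Sum>c\<in>{c. (u,c)\<in>A}. npaths A c v)"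
  by (rule npaths_rec[OF finA acyc])
lemma nrec_par: "u \<noteq> v \<Longrightarrow> npaths A u v = (\<Sum>p\<in>{p. (p,v)\<in>A}. npaths A u p)"
  by (rule npaths_rec_par[OF finA acyc])

lemma MU: "mu u k = (if k = 0 then (if u \<in> VH V A then 1 else 0) else if k \<in> X \<and> u = lf k then 1 else 0)
   + (\<Sum>c\<in>{c. (u,c)\<in>A}. mu c k)"
proof (cases "k = 0")
  case True
  have "mu u k = (\<Sum>g\<in>VH V A. (if u = g then 1 else 0) + (\<Sum>c\<in>{c. (u,c)\<in>A}. npaths A c g))"
    using True mu0 nrec[of u] by simp
  also have "\<dots> = (if u \<in> VH V A then 1 else 0) + (\<Sum>c\<in>{c. (u,c)\<in>A}. \<Sum>g\<in>VH V A. npaths A c g)"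
    by (simp add: sum.distrib finVH sum.swap[of _ "VH V A"])
  finally show ?thesis using True by (simp add: mu0)
next
  case False
  show ?thesis
  proof (cases "k \<in> X")
    case True
    then show ?thesis using False by (simp add: muX nrec[of u "lf k"])
  next
    case F: False
    then show ?thesis using False by (simp add: muO)
  qed
qed

lemma mu_leaf: "a \<in> X \<Longrightarrow> mu (lf a) = delta n {a}"
proof
  fix k assume a: "a \<in> X"
  have l: "is_leaf A (lf a)" "lf a \<notin> VH V A" using lf_in[OF a] excl unfolding VH_def by auto
  show "mu (lf a) k = delta n {a} k"
    using X0[OF a] l leaf_ch[OF l(1)] injlf a unfolding delta_def
    by (subst MU) (auto dest: inj_onD)
qed

lemma wfc: "wf (A\<inverse>)" by (rule finite_acyclic_wf_converse[OF finA acyc])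

lemma LR: "v \<in> V \<Longrightarrow> \<exists>k\<in>X. mu v k > 0"
proof (induction v rule: wf_induct_rule[OF wfc])
  case (1 v)
  note vV = 1(2)
  have IH: "\<And>c. (v,c) \<in> A \<Longrightarrow> \<exists>k\<in>X. mu c k > 0"
  proof -
    fix c assume "(v,c) \<in> A"
    moreover hence "c \<in> V" by (rule inV2)
    ultimately show "\<exists>k\<in>X. mu c k > 0" using 1(1) by simp
  qed
  show ?case
  proof (cases "is_leaf A v")
    case True
    obtain k where k: "k \<in> X" "v = lf k" using leaf_lf[OF vV True] by (elim bexE)
    have "mu v k > 0" using k X0[OF k(1)] by (subst MU) simp
    thus ?thesis using k(1) by (rule bexI)
  next
    case False
    have "{c. (v,c) \<in> A} \<noteq> {}"
    proof -
      consider "is_root A v" | "is_tree_node A v" | "is_ret A v" using cls[OF vV] False by blast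
      thus ?thesis
      proof cases
        case 1 thus ?thesis using root_ch by fastforce
      next
        case 2 thus ?thesis using tree_ch by fastforce
      next
        case 3 thus ?thesis using ret_ch by fastforce
      qed
    qed
    then obtain c where c: "(v,c) \<in> A" by blast
    then obtain k where k: "k \<in> X" "mu c k > 0" using IH by blast
    have "mu c k \<le> (\<Sum>c\<in>{c. (v,c)\<in>A}. mu c k)" by (rule member_le_sum) (use c fin_ch in auto)
    hence "mu v k > 0" using k by (subst MU) simp
    thus ?thesis using k(1) by (rule bexI)
  qed
qed

end
context net begin

lemma mu_two: "{c. (u,c) \<in> A} = {d1,d2} \<Longrightarrow> d1 \<noteq> d2 \<Longrightarrow>
   mu u k = (if k = 0 then (if u \<in> VH V A then 1 else 0) else if k \<in> X \<and> u = lf k then 1 else 0) + mu d1 k + mu d2 k"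
  by (subst MU) simp

lemma TREE2:
  assumes "c \<in> V" "is_tree_node A c" "k \<in> X" "\<forall>m\<in>X. m \<noteq> k \<longrightarrow> mu c m = 0"
  shows "mu c k \<ge> 2"
proof -
  obtain d1 d2 where d: "{x. (c,x) \<in> A} = {d1,d2}" "d1 \<noteq> d2" using tree_ch[OF assms(2)] by blast
  have dV: "d1 \<in> V" "d2 \<in> V" using d(1) inV2 by blast+
  obtain k1 where k1: "k1 \<in> X" "mu d1 k1 > 0" using LR[OF dV(1)] by blast
  obtain k2 where k2: "k2 \<in> X" "mu d2 k2 > 0" using LR[OF dV(2)] by blast
  have "mu c k1 > 0" using mu_two[OF d, of k1] k1 by simp
  hence "k1 = k" using assms(4) k1 by auto
  have "mu c k2 > 0" using mu_two[OF d, of k2] k2 by simp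
  hence "k2 = k" using assms(4) k2 by auto
  show ?thesis using mu_two[OF d, of k] k1 k2 \<open>k1 = k\<close> \<open>k2 = k\<close> by simp
qed

lemma notroot: "(p,c) \<in> A \<Longrightarrow> \<not> is_root A c"
  using root_par by blast

lemma ONE:
  assumes "c \<in> V" "(p,c) \<in> A" "mu c 0 = 0" "k \<in> X" "\<forall>m\<in>X. m \<noteq> k \<longrightarrow> mu c m = 0" "mu c k \<le> 1"
  shows "c = lf k"
proof -
  have "\<not> is_ret A c"
  proof
    assume "is_ret A c" hence "c \<in> VH V A" using assms(1) by (simp add: VH_def)
    thus False using assms(3) by (subst (asm) MU) simp
  qed
  moreover have "\<not> is_tree_node A c" using TREE2[OF assms(1) _ assms(4,5)] assms(6) by auto
  ultimately have "is_leaf A c" using cls[OF assms(1)] notroot[OF assms(2)] by blast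
  then obtain k' where k': "k' \<in> X" "c = lf k'" using leaf_lf assms(1) by blast
  have "mu c k' \<ge> 1" using k' X0[OF k'(1)] by (subst MU) simp
  hence "k' = k" using assms(5) k' by force
  thus ?thesis using k' by simp
qed

lemma TWO:
  assumes "c \<in> V" "(p,c) \<in> A" "mu c 0 = 1" "k \<in> X" "\<forall>m\<in>X. m \<noteq> k \<longrightarrow> mu c m = 0" "mu c k \<le> 1"
  shows "is_ret A c \<and> (c, lf k) \<in> A"
proof -
  have "\<not> is_leaf A c"
  proof
    assume l: "is_leaf A c" hence "c \<notin> VH V A" using excl by (auto simp: VH_def)
    thus False using assms(3) leaf_ch[OF l] by (subst (asm) MU) simp
  qed
  moreover have "\<not> is_tree_node A c" using TREE2[OF assms(1) _ assms(4,5)] assms(6) by auto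
  ultimately have r: "is_ret A c" using cls[OF assms(1)] notroot[OF assms(2)] by blast
  then obtain d where d: "{x. (c,x) \<in> A} = {d}" using ret_ch by blast
  have cVH: "c \<in> VH V A" using r assms(1) by (simp add: VH_def)
  have cnl: "\<And>m. m \<in> X \<Longrightarrow> c \<noteq> lf m" using lf_in r excl by blast
  have md: "\<And>m. m \<in> X \<Longrightarrow> mu d m = mu c m"
    using cnl X0 d by (subst (2) MU) simp
  have "mu c 0 = 1 + mu d 0" using cVH d by (subst MU) simp
  hence "mu d 0 = 0" using assms(3) by simp
  have "d = lf k"
    by (rule ONE[of d c]) (use d inV2 \<open>mu d 0 = 0\<close> assms md in auto)
  thus ?thesis using r d by auto
qed

lemma CH:
  assumes "u \<in> VT V A" "mu u = delta n {0,i,j}" "i \<in> {1..n}" "j \<in> {1..n}" "i \<noteq> j"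
  shows "\<exists>h x y. (x = i \<and> y = j \<or> x = j \<and> y = i) \<and> x \<in> X \<and> y \<in> X \<and> is_tree_node A u \<and>
          (u, lf y) \<in> A \<and> (u, h) \<in> A \<and> is_ret A h \<and> (h, lf x) \<in> A"
proof -
  have uV: "u \<in> V" using assms(1) by (simp add: VT_def)
  have dl: "\<And>m. delta n {0,i,j} m = (if m \<le> n \<and> (m = 0 \<or> m = i \<or> m = j) then 1 else 0)"
    by (simp add: delta_def)
  have nl: "\<not> is_leaf A u"
  proof
    assume l: "is_leaf A u" hence "u \<notin> VH V A" using excl by (auto simp: VH_def)
    hence "mu u 0 = 0" using leaf_ch[OF l] by (subst MU) simp
    thus False using assms(2) dl[of 0] by simp
  qed
  hence tr: "is_tree_node A u" using assms(1) by (simp add: VT_def)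
  obtain c1 c2 where c: "{x. (u,x) \<in> A} = {c1,c2}" "c1 \<noteq> c2" using tree_ch[OF tr] by blast
  have cV: "c1 \<in> V" "c2 \<in> V" using c(1) inV2 by blast+
  have uVH: "u \<notin> VH V A" using tr excl by (auto simp: VH_def)
  have unl: "\<And>m. m \<in> X \<Longrightarrow> u \<noteq> lf m" using lf_in nl by blast
  have sm: "\<And>m. delta n {0,i,j} m = mu c1 m + mu c2 m"
  proof -
    fix m
    have "mu u m = mu c1 m + mu c2 m" using mu_two[OF c, of m] uVH unl[of m] by auto
    thus "delta n {0,i,j} m = mu c1 m + mu c2 m" using assms(2) by simp
  qed
  obtain k1 where k1: "k1 \<in> X" "mu c1 k1 > 0" using LR[OF cV(1)] by blast
  obtain k2 where k2: "k2 \<in> X" "mu c2 k2 > 0" using LR[OF cV(2)] by blast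
  have k1ij: "k1 = i \<or> k1 = j" using sm[of k1] k1 dl[of k1] X0[OF k1(1)] by (auto split: if_splits)
  have k2ij: "k2 = i \<or> k2 = j" using sm[of k2] k2 dl[of k2] X0[OF k2(1)] by (auto split: if_splits)
  have "k1 \<noteq> k2" using sm[of k1] k1 k2 dl[of k1] by (auto split: if_splits)
  have z1: "\<forall>m\<in>X. m \<noteq> k1 \<longrightarrow> mu c1 m = 0"
  proof (intro ballI impI)
    fix m assume m: "m \<in> X" "m \<noteq> k1"
    show "mu c1 m = 0"
    proof (cases "m = k2")
      case True thus ?thesis using sm[of m] dl[of m] k2 by (auto split: if_splits)
    next
      case False
      hence "m \<noteq> i" "m \<noteq> j" "m \<noteq> 0" using m k1ij k2ij \<open>k1 \<noteq> k2\<close> X0[OF m(1)] by auto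
      thus ?thesis using sm[of m] dl[of m] by simp
    qed
  qed
  have z2: "\<forall>m\<in>X. m \<noteq> k2 \<longrightarrow> mu c2 m = 0"
  proof (intro ballI impI)
    fix m assume m: "m \<in> X" "m \<noteq> k2"
    show "mu c2 m = 0"
    proof (cases "m = k1")
      case True thus ?thesis using sm[of m] dl[of m] k1 by (auto split: if_splits)
    next
      case False
      hence "m \<noteq> i" "m \<noteq> j" "m \<noteq> 0" using m k1ij k2ij \<open>k1 \<noteq> k2\<close> X0[OF m(1)] by auto
      thus ?thesis using sm[of m] dl[of m] by simp
    qed
  qed
  have le1: "mu c1 k1 \<le> 1" "mu c2 k2 \<le> 1" using sm[of k1] sm[of k2] dl[of k1] dl[of k2]
    by (auto split: if_splits)
  have s0: "mu c1 0 + mu c2 0 = 1" using sm[of 0] dl[of 0] by simp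
  have e1: "(u,c1) \<in> A" "(u,c2) \<in> A" using c(1) by auto
  show ?thesis
  proof (cases "mu c1 0 = 0")
    case True
    hence "mu c2 0 = 1" using s0 by simp
    have "c1 = lf k1" by (rule ONE[OF cV(1) e1(1) True k1(1) z1 le1(1)])
    moreover have "is_ret A c2 \<and> (c2, lf k2) \<in> A"
      by (rule TWO[OF cV(2) e1(2) \<open>mu c2 0 = 1\<close> k2(1) z2 le1(2)])
    ultimately show ?thesis using e1 k1 k2 k1ij k2ij \<open>k1 \<noteq> k2\<close> tr by metis
  next
    case False
    hence "mu c1 0 = 1" "mu c2 0 = 0" using s0 by auto
    have "c2 = lf k2" by (rule ONE[OF cV(2) e1(2) \<open>mu c2 0 = 0\<close> k2(1) z2 le1(2)])
    moreover have "is_ret A c1 \<and> (c1, lf k1) \<in> A"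
      by (rule TWO[OF cV(1) e1(1) \<open>mu c1 0 = 1\<close> k1(1) z1 le1(1)])
    ultimately show ?thesis using e1 k1 k2 k1ij k2ij \<open>k1 \<noteq> k2\<close> tr by metis
  qed
qed

end

lemma count_img_mset_set:
  assumes "finite S" shows "count (image_mset f (mset_set S)) y = card {x\<in>S. f x = y}"
proof -
  have "count (image_mset f (mset_set S)) y = (\<Sum>x | x \<in># mset_set S \<and> y = f x. count (mset_set S) x)"
    by (rule count_image_mset')
  also have "\<dots> = (\<Sum>x | x \<in> S \<and> f x = y. 1)"
    by (rule sum.cong) (use assms in auto)
  finally show ?thesis by simp
qed

lemma sing_mem: assumes "{c. Q c} = {p}" "Q x" shows "x = p"
proof -
  have "x \<in> {c. Q c}" using assms(2) by simp
  thus ?thesis unfolding assms(1) by simp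
qed

lemma sing_eq: assumes "{c. Q c} = {p}" "Q x" shows "{c. Q c} = {x}"
  using sing_mem[OF assms] assms(1) by simp

context net begin


lemma fwd:
  assumes "i \<in> {1..n}" "j \<in> {1..n}" "i \<noteq> j" and rc: "ret_cherry_net V A X lf i j"
  shows "ret_cherry_mset n (mu_rep n V A X lf) i j"
proof -
  obtain h w where iX: "i \<in> X" and jX: "j \<in> X" and e: "(h, lf i) \<in> A" "(w, lf j) \<in> A" "(w,h) \<in> A"
    and hr: "is_ret A h" and wt: "is_tree_node A w"
    using rc unfolding ret_cherry_net_def by blast
  have wV: "w \<in> V" and hV: "h \<in> V" using e inV1 by auto
  have li: "is_leaf A (lf i)" and lj: "is_leaf A (lf j)" using lf_in iX jX by auto
  have hne: "lf j \<noteq> h" using lj hr excl by blast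
  have chw: "{x. (w,x) \<in> A} = {lf j, h}"
  proof -
    obtain c1 c2 where c: "{x. (w,x) \<in> A} = {c1,c2}" "c1 \<noteq> c2" using tree_ch[OF wt] by blast
    have "lf j \<in> {c1,c2}" "h \<in> {c1,c2}" using c(1) e by blast+
    thus ?thesis using c hne by auto
  qed
  have chh: "{x. (h,x) \<in> A} = {lf i}"
  proof -
    obtain d where d: "{x. (h,x) \<in> A} = {d}" using ret_ch[OF hr] by (elim exE)
    thus ?thesis using e(1) by auto
  qed
  have hVH: "h \<in> VH V A" using hV hr by (simp add: VH_def)
  have wVH: "w \<notin> VH V A" using wt excl by (auto simp: VH_def)
  have hnl: "\<And>m. m \<in> X \<Longrightarrow> h \<noteq> lf m" using lf_in hr excl by blast
  have wnl: "\<And>m. m \<in> X \<Longrightarrow> w \<noteq> lf m" using lf_in wt excl by blast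
  have muh: "\<And>k. mu h k = (if k = 0 then 1 else 0) + delta n {i} k"
    using hVH hnl chh mu_leaf[OF iX] by (subst MU) auto
  have muw: "mu w = delta n {0,i,j}"
  proof
    fix k
    have "mu w k = delta n {j} k + mu h k"
      using wVH wnl chw hne mu_leaf[OF jX] by (subst MU) (auto split: if_splits)
    thus "mu w k = delta n {0,i,j} k" using muh assms(1,2,3) unfolding delta_def by auto
  qed
  have wVT: "w \<in> VT V A" using wV wt by (simp add: VT_def)
  have uniq: "{x \<in> VT V A. mu x = delta n {0,i,j}} = {w}"
  proof (intro equalityI subsetI)
    fix x assume "x \<in> {x \<in> VT V A. mu x = delta n {0,i,j}}"
    hence x: "x \<in> VT V A" "mu x = delta n {0,i,j}" by auto
    then obtain h' a b where ab: "a = i \<and> b = j \<or> a = j \<and> b = i" and xt: "is_tree_node A x"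
      and xb: "(x, lf b) \<in> A"
      using CH[OF x assms(1,2,3)] by blast
    show "x \<in> {w}"
    proof (cases "b = j")
      case True
      obtain p where P: "{c. (c, lf j) \<in> A} = {p}" using leaf_par[OF lj] by blast
      have "x = p" using sing_mem[OF P] xb True by simp
      moreover have "w = p" using sing_mem[OF P] e(2) by simp
      ultimately show ?thesis by simp
    next
      case False
      hence "b = i" using ab by auto
      obtain p where P: "{c. (c, lf i) \<in> A} = {p}" using leaf_par[OF li] by blast
      have "x = p" using sing_mem[OF P] xb \<open>b = i\<close> by simp
      moreover have "h = p" using sing_mem[OF P] e(1) by simp
      ultimately have "x = h" by simp
      thus ?thesis using xt hr excl by blast
    qed
  qed (use wVT muw in auto)
  have cnt: "count (mu_rep n V A X lf) (delta n {0,i,j}) = 1"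
    unfolding mu_rep_def by (simp add: count_img_mset_set[OF finVT] uniq)
  have cond: "\<forall>m \<in># mu_rep n V A X lf. m \<noteq> delta n {i} \<and> m \<noteq> delta n {j} \<longrightarrow> m i \<le> m 0 \<and> m j \<le> m i"
  proof (intro ballI impI)
    fix m assume "m \<in># mu_rep n V A X lf" and ne: "m \<noteq> delta n {i} \<and> m \<noteq> delta n {j}"
    then obtain x where x: "x \<in> VT V A" "m = mu x" unfolding mu_rep_def using finVT by auto
    have xi: "x \<noteq> lf i" using ne x mu_leaf[OF iX] by auto
    have xj: "x \<noteq> lf j" using ne x mu_leaf[OF jX] by auto
    have xh: "x \<noteq> h" using x(1) hr excl by (auto simp: VT_def)
    obtain p where pi: "{c. (c, lf i) \<in> A} = {p}" using leaf_par[OF li] by blast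
    hence pi': "{c. (c, lf i) \<in> A} = {h}" using e(1) by (rule sing_eq)
    obtain p where pj: "{c. (c, lf j) \<in> A} = {p}" using leaf_par[OF lj] by blast
    hence pj': "{c. (c, lf j) \<in> A} = {w}" using e(2) by (rule sing_eq)
    have m_i: "m i = npaths A x h" using x muX[OF iX] nrec_par[OF xi] pi' by simp
    have m_j: "m j = npaths A x w" using x muX[OF jX] nrec_par[OF xj] pj' by simp
    have "npaths A x w \<le> (\<Sum>p\<in>{p. (p,h)\<in>A}. npaths A x p)"
      by (rule member_le_sum) (use e(3) fin_par in auto)
    hence a1: "m j \<le> m i" using m_i m_j nrec_par[OF xh] by simp
    have "npaths A x h \<le> (\<Sum>g\<in>VH V A. npaths A x g)"
      by (rule member_le_sum) (use hVH finVH in auto)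
    hence "m i \<le> m 0" using m_i x mu0 by simp
    thus "m i \<le> m 0 \<and> m j \<le> m i" using a1 by simp
  qed
  show ?thesis unfolding ret_cherry_mset_def using cnt cond by blast
qed

end
context net begin

lemma REACH:
  assumes rV: "r \<in> V" and rr: "is_root A r"
  shows "v \<in> V \<Longrightarrow> (r, v) \<in> A\<^sup>*"
proof (induction v rule: wf_induct_rule[OF finite_acyclic_wf[OF finA acyc]])
  case (1 v)
  show ?case
  proof (cases "is_root A v")
    case True thus ?thesis using root1 rV rr 1(2) by auto
  next
    case False
    hence "\<not> is_root A v" .
    have "{c. (c,v) \<in> A} \<noteq> {}"
      using cls[OF 1(2)] False leaf_par tree_par ret_par by fastforce
    then obtain p where p: "(p,v) \<in> A" by blast
    hence "(r,p) \<in> A\<^sup>*" using 1 inV1 by blast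
    thus ?thesis using p by (meson rtrancl.rtrancl_into_rtrancl)
  qed
qed

lemma bwd:
  assumes "i \<in> {1..n}" "j \<in> {1..n}" "i \<noteq> j" and rc: "ret_cherry_mset n (mu_rep n V A X lf) i j"
  shows "ret_cherry_net V A X lf i j"
proof -
  have "delta n {0,i,j} \<in># mu_rep n V A X lf" using rc unfolding ret_cherry_mset_def
    by (metis count_eq_zero_iff zero_neq_one)
  then obtain u where u: "u \<in> VT V A" "mu u = delta n {0,i,j}" unfolding mu_rep_def using finVT by auto
  then obtain h x y where ab: "x = i \<and> y = j \<or> x = j \<and> y = i" and xX: "x \<in> X" and yX: "y \<in> X"
    and ut: "is_tree_node A u" and e: "(u, lf y) \<in> A" "(u,h) \<in> A" "(h, lf x) \<in> A" and hr: "is_ret A h"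
    using CH[OF u assms(1,2,3)] by blast
  show ?thesis
  proof (cases "x = i")
    case True
    hence "y = j" using ab assms(3) by auto
    thus ?thesis unfolding ret_cherry_net_def using True xX yX assms(3) e hr ut by blast
  next
    case False
    hence xy: "x = j" "y = i" using ab by auto
    have iX: "i \<in> X" and jX: "j \<in> X" using xX yX xy by auto
    have uV: "u \<in> V" and hV: "h \<in> V" using e inV1 by auto
    obtain r where rV: "r \<in> V" and rr: "is_root A r" using root1 by blast
    obtain t where cht: "{c. (r,c) \<in> A} = {t}" using root_ch[OF rr] by blast
    have rt: "(r,t) \<in> A" using cht by auto
    have tV: "t \<in> V" using rt inV2 by blast
    have desc: "\<And>v. v \<in> V \<Longrightarrow> v \<noteq> r \<Longrightarrow> (t,v) \<in> A\<^sup>*"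
    proof -
      fix v assume v: "v \<in> V" "v \<noteq> r"
      have "(r,v) \<in> A\<^sup>+" using REACH[OF rV rr v(1)] v(2) by (auto simp: rtrancl_eq_or_trancl)
      then obtain z where "(r,z) \<in> A" "(z,v) \<in> A\<^sup>*" using tranclD by metis
      thus "(t,v) \<in> A\<^sup>*" using cht by auto
    qed
    have ur: "u \<noteq> r" using ut rr excl by blast
    have tt: "is_tree_node A t"
    proof -
      have "\<not> is_root A t" using notroot[OF rt] .
      moreover have "\<not> is_leaf A t"
      proof
        assume l: "is_leaf A t"
        have "(t,u) \<in> A\<^sup>*" using desc[OF uV ur] .
        hence "t = u" using leaf_ch[OF l] by (auto elim: converse_rtranclE)
        thus False using l ut excl by blast
      qed
      moreover have "\<not> is_ret A t"
      proof
        assume rt': "is_ret A t"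
        obtain p1 p2 where pp: "{c. (c,t) \<in> A} = {p1,p2}" "p1 \<noteq> p2" using ret_par[OF rt'] by blast
        have p12: "(p1,t) \<in> A" "(p2,t) \<in> A"
          using pp(1) mem_Collect_eq[of p1 "\<lambda>c. (c,t) \<in> A"] mem_Collect_eq[of p2 "\<lambda>c. (c,t) \<in> A"] by simp_all
        obtain p where p: "(p,t) \<in> A" "p \<noteq> r"
        proof (cases "p1 = r")
          case True thus ?thesis using that[of p2] p12 pp(2) by simp
        next
          case False thus ?thesis using that[of p1] p12 by simp
        qed
        have "(t,p) \<in> A\<^sup>*" using desc[OF inV1[OF p(1)] p(2)] .
        hence "(t,t) \<in> A\<^sup>+" using p(1) by (meson rtrancl_into_trancl1)
        thus False using acyc by (simp add: acyclic_def)
      qed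
      ultimately show ?thesis using cls[OF tV] by blast
    qed
    have tVT: "t \<in> VT V A" using tV tt by (simp add: VT_def)
    obtain p1 p2 where pp: "{c. (c,h) \<in> A} = {p1,p2}" "p1 \<noteq> p2" using ret_par[OF hr] by blast
    have uin: "u \<in> {p1,p2}" using e(2) pp(1)[symmetric] by simp
    obtain q where q: "{c. (c,h) \<in> A} = {u,q}" "u \<noteq> q"
    proof (cases "u = p1")
      case True thus ?thesis using that[of p2] pp by simp
    next
      case False hence "u = p2" using uin by simp
      thus ?thesis using that[of p1] pp by (simp add: insert_commute)
    qed
    have qh: "(q,h) \<in> A" using q by auto
    have qr: "q \<noteq> r"
    proof
      assume "q = r" hence "h = t" using qh cht by auto
      thus False using hr tt excl by blast
    qed
    have tq: "npaths A t q > 0" using npaths_pos[OF finA acyc desc[OF inV1[OF qh] qr]] .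
    have li: "is_leaf A (lf i)" and lj: "is_leaf A (lf j)" using lf_in iX jX by auto
    obtain p where "{c. (c, lf i) \<in> A} = {p}" using leaf_par[OF li] by blast
    moreover have "(u, lf i) \<in> A" using e(1) xy by simp
    ultimately have pi': "{c. (c, lf i) \<in> A} = {u}" by (rule sing_eq)
    obtain p where "{c. (c, lf j) \<in> A} = {p}" using leaf_par[OF lj] by blast
    moreover have "(h, lf j) \<in> A" using e(3) xy by simp
    ultimately have pj': "{c. (c, lf j) \<in> A} = {h}" by (rule sing_eq)
    have ti: "t \<noteq> lf i" and tj: "t \<noteq> lf j" using li lj tt excl by metis+
    have th: "t \<noteq> h" using hr tt excl by blast
    have mti: "mu t i = npaths A t u" using muX[OF iX] nrec_par[OF ti] pi' by simp
    have mth: "npaths A t h = npaths A t u + npaths A t q" using nrec_par[OF th] q by simp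
    have mtj: "mu t j = npaths A t u + npaths A t q" using muX[OF jX] nrec_par[OF tj] pj' mth by simp
    have hVH: "h \<in> VH V A" using hV hr by (simp add: VH_def)
    have "npaths A t h \<le> (\<Sum>g\<in>VH V A. npaths A t g)"
      by (rule member_le_sum) (use hVH finVH in auto)
    hence mt0: "mu t 0 > 0" using mu0 mth tq by simp
    have n1: "mu t \<noteq> delta n {i}"
    proof
      assume "mu t = delta n {i}" hence "mu t j = 0" using assms(3) by (simp add: delta_def)
      thus False using mtj tq by simp
    qed
    have n2: "mu t \<noteq> delta n {j}"
    proof
      assume "mu t = delta n {j}" hence "mu t 0 = 0" using assms(2) by (simp add: delta_def)
      thus False using mt0 by simp
    qed
    have "mu t \<in># mu_rep n V A X lf" unfolding mu_rep_def using tVT finVT by simp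
    hence "mu t j \<le> mu t i" using rc n1 n2 unfolding ret_cherry_mset_def by blast
    thus ?thesis using mti mtj tq by simp
  qed
qed

end

theorem mainTheorem4:
  fixes n :: nat and V :: "'v set" and A :: "('v \<times> 'v) set"
    and X :: "nat set" and lf :: "nat \<Rightarrow> 'v" and i j :: nat
  assumes "phylo_network n V A X lf"
    and "i \<in> {1..n}" and "j \<in> {1..n}" and "i \<noteq> j"
  shows "ret_cherry_net V A X lf i j \<longleftrightarrow> ret_cherry_mset n (mu_rep n V A X lf) i j"
proof -
  interpret net n V A X lf using assms(1) by unfold_locales
  show ?thesis using fwd[OF assms(2,3,4)] bwd[OF assms(2,3,4)] by blast
qed

end
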